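(* Let $k\ge 2$, let $G$ be a finite simple graph with a closed neighborhood balanced $k$-coloring $c$, and let $z\in V(G)$ with $c(z)=k$. Let $G'$ be obtained from $G$ by a $(3k-2)$-vertex addition at $z$, with the coloring $c'$ extending $c$ described below. Then $c'$ is a closed neighborhood balanced $k$-coloring of $G'$, and compared with $c$ on $G$, $c'$ has exactly one additional vertex of color $k$ and exactly three additional vertices of each color $1,\dots,k-1$.
   Context: For a vertex $v$, $N[v]=\{v\}\cup\{u : uv\in E(G)\}$. A closed neighborhood balanced $k$-coloring of $G$ is a map $c: V(G)\to\{1,\dots,k\}$ such that for every vertex $v$ the numbers $|\{u\in N[v] : c(u)=i\}|$, $i=1,\dots,k$, are all equal. A $(3k-2)$-vertex addition at $z$ (where $c(z)=k$): add new vertices $u_1,\dots,u_k$, each adjacent to $z$; for each $1\le i\le k-1$, $u_i$ is adjacent to $u_{i+1},\dots,u_{k-1}$; add new vertices $v_1,\dots,v_{k-1}$ and $v_1',\dots,v_{k-1}'$, all adjacent to $u_k$; for each $1\le i\le k-2$, $v_i$ is adjacent to $v_{i+1},\dots,v_{k-1}$ and $v_i'$ is adjacent to $v_{i+1}',\dots,v_{k-1}'$; there are no other new edges. The coloring $c'$ agrees with $c$ on $V(G)$, gives $u_i$ color $i$ ($1\le i\le k$), and gives both $v_i$ and $v_i'$ color $i$ ($1\le i\le k-1$). *)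

theory Defs
  imports Main
begin

definition simple_graph :: "'a set \<Rightarrow> ('a \<Rightarrow> 'a \<Rightarrow> bool) \<Rightarrow> bool" where
  "simple_graph V E \<longleftrightarrow> finite V \<and> (\<forall>u v. E u v \<longrightarrow> u \<in> V \<and> v \<in> V)
     \<and> (\<forall>u v. E u v \<longrightarrow> E v u) \<and> (\<forall>v. \<not> E v v)"

definition closed_nbhd :: "('a \<Rightarrow> 'a \<Rightarrow> bool) \<Rightarrow> 'a \<Rightarrow> 'a set" where
  "closed_nbhd E v = insert v {u. E v u}"

definition cnb_coloring :: "'a set \<Rightarrow> ('a \<Rightarrow> 'a \<Rightarrow> bool) \<Rightarrow> nat \<Rightarrow> ('a \<Rightarrow> nat) \<Rightarrow> bool" where
  "cnb_coloring V E k c \<longleftrightarrow> (\<forall>v\<in>V. c v \<in> {1..k}) \<and>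
     (\<forall>v\<in>V. \<forall>i\<in>{1..k}. \<forall>j\<in>{1..k}.
        card {u \<in> closed_nbhd E v. c u = i} = card {u \<in> closed_nbhd E v. c u = j})"

text \<open>New vertices of the (3k-2)-vertex addition: U i = u_i, W i = v_i, W' i = v_i'.\<close>
datatype newv = U nat | W nat | W' nat

definition add_vertices :: "nat \<Rightarrow> 'a set \<Rightarrow> ('a + newv) set" where
  "add_vertices k V = Inl ` V \<union> Inr ` (U ` {1..k} \<union> W ` {1..k-1} \<union> W' ` {1..k-1})"

definition new_edge :: "nat \<Rightarrow> 'a \<Rightarrow> ('a + newv) \<Rightarrow> ('a + newv) \<Rightarrow> bool" where
  "new_edge k z x y \<longleftrightarrow>
     (\<exists>i\<in>{1..k}. x = Inl z \<and> y = Inr (U i)) \<or>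
     (\<exists>i j. 1 \<le> i \<and> i < j \<and> j \<le> k - 1 \<and> x = Inr (U i) \<and> y = Inr (U j)) \<or>
     (\<exists>i\<in>{1..k-1}. x = Inr (U k) \<and> (y = Inr (W i) \<or> y = Inr (W' i))) \<or>
     (\<exists>i j. 1 \<le> i \<and> i < j \<and> j \<le> k - 1 \<and>
        ((x = Inr (W i) \<and> y = Inr (W j)) \<or> (x = Inr (W' i) \<and> y = Inr (W' j))))"

definition add_edges :: "nat \<Rightarrow> 'a \<Rightarrow> ('a \<Rightarrow> 'a \<Rightarrow> bool) \<Rightarrow> ('a + newv) \<Rightarrow> ('a + newv) \<Rightarrow> bool" where
  "add_edges k z E x y \<longleftrightarrow>
     (\<exists>a b. x = Inl a \<and> y = Inl b \<and> E a b) \<or> new_edge k z x y \<or> new_edge k z y x"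

fun add_coloring :: "('a \<Rightarrow> nat) \<Rightarrow> ('a + newv) \<Rightarrow> nat" where
  "add_coloring c (Inl v) = c v"
| "add_coloring c (Inr (U i)) = i"
| "add_coloring c (Inr (W i)) = i"
| "add_coloring c (Inr (W' i)) = i"

end

theory Submission
  imports Defs
begin

lemma nb_Inl: "closed_nbhd (add_edges k z E) (Inl v) =
   Inl ` closed_nbhd E v \<union> (if v = z then Inr ` U ` {1..k} else {})"
  unfolding closed_nbhd_def add_edges_def new_edge_def by auto

lemma nb_Us: "1 \<le> i \<Longrightarrow> i < k \<Longrightarrow> closed_nbhd (add_edges k z E) (Inr (U i)) =
   insert (Inl z) (Inr ` U ` {1..k-1})"
  unfolding closed_nbhd_def add_edges_def new_edge_def
  apply (rule set_eqI)
  subgoal for x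
    apply (cases x)
     apply auto[1]
    subgoal for y by (cases y; auto; metis linorder_neqE_nat)
    done
  done

lemma nb_Uk: "2 \<le> k \<Longrightarrow> closed_nbhd (add_edges k z E) (Inr (U k)) =
   {Inl z, Inr (U k)} \<union> Inr ` W ` {1..k-1} \<union> Inr ` W' ` {1..k-1}"
  unfolding closed_nbhd_def add_edges_def new_edge_def
  apply (rule set_eqI)
  subgoal for x
    apply (cases x)
     apply auto[1]
    subgoal for y by (cases y; auto)
    done
  done

lemma nb_W: "1 \<le> i \<Longrightarrow> i < k \<Longrightarrow> closed_nbhd (add_edges k z E) (Inr (W i)) =
   insert (Inr (U k)) (Inr ` W ` {1..k-1})"
  unfolding closed_nbhd_def add_edges_def new_edge_def
  apply (rule set_eqI)
  subgoal for x
    apply (cases x)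
     apply auto[1]
    subgoal for y by (cases y; auto; metis linorder_neqE_nat)
    done
  done

lemma nb_W': "1 \<le> i \<Longrightarrow> i < k \<Longrightarrow> closed_nbhd (add_edges k z E) (Inr (W' i)) =
   insert (Inr (U k)) (Inr ` W' ` {1..k-1})"
  unfolding closed_nbhd_def add_edges_def new_edge_def
  apply (rule set_eqI)
  subgoal for x
    apply (cases x)
     apply auto[1]
    subgoal for y by (cases y; auto; metis linorder_neqE_nat)
    done
  done


lemma filt1: "j \<in> {1..k} \<Longrightarrow> c z = k \<Longrightarrow>
  {u \<in> insert (Inl z) (Inr ` U ` {1..k-1}). add_coloring c u = j} = (if j = k then {Inl z} else {Inr (U j)})"
  by auto

lemma filtUk: "2 \<le> k \<Longrightarrow> j \<in> {1..k} \<Longrightarrow> c z = k \<Longrightarrow>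
  {u \<in> {Inl z, Inr (U k)} \<union> Inr ` W ` {1..k-1} \<union> Inr ` W' ` {1..k-1}. add_coloring c u = j}
   = (if j = k then {Inl z, Inr (U k)} else {Inr (W j), Inr (W' j)})"
  by auto

lemma filtW: "j \<in> {1..k} \<Longrightarrow>
  {u \<in> insert (Inr (U k)) (Inr ` W ` {1..k-1}). add_coloring c u = j} = (if j = k then {Inr (U k)} else {Inr (W j)})"
  by auto

lemma filtW': "j \<in> {1..k} \<Longrightarrow>
  {u \<in> insert (Inr (U k)) (Inr ` W' ` {1..k-1}). add_coloring c u = j} = (if j = k then {Inr (U k)} else {Inr (W' j)})"
  by auto

lemma filtInl: "finite N \<Longrightarrow> j \<in> {1..k} \<Longrightarrow>
  card {u \<in> Inl ` N \<union> Inr ` U ` {1..k}. add_coloring c u = j} = card {u \<in> N. c u = j} + 1"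
proof -
  assume f: "finite N" and j: "j \<in> {1..k}"
  have "{u \<in> Inl ` N \<union> Inr ` U ` {1..k}. add_coloring c u = j} = Inl ` {u \<in> N. c u = j} \<union> {Inr (U j)}"
    using j by auto
  moreover have "card (Inl ` {u \<in> N. c u = j}) = card {u \<in> N. c u = j}"
    by (rule card_image) (auto simp: inj_on_def)
  moreover have "Inr (U j) \<notin> Inl ` {u \<in> N. c u = j}" by auto
  ultimately show ?thesis using f by simp
qed

lemma filtInl0: "{u \<in> Inl ` N. add_coloring c u = j} = Inl ` {u \<in> N. c u = j}"
  by auto

lemma cardInl: "card (Inl ` A) = card A"
  by (rule card_image) (auto simp: inj_on_def)

theorem proposition2p13:
  fixes V :: "'a set" and E :: "'a \<Rightarrow> 'a \<Rightarrow> bool" and c :: "'a \<Rightarrow> nat"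
    and k :: nat and z :: 'a
  assumes "k \<ge> 2"
    and "simple_graph V E"
    and "cnb_coloring V E k c"
    and "z \<in> V" and "c z = k"
  shows "cnb_coloring (add_vertices k V) (add_edges k z E) k (add_coloring c)
    \<and> card {x \<in> add_vertices k V. add_coloring c x = k} = card {v \<in> V. c v = k} + 1
    \<and> (\<forall>i\<in>{1..k-1}. card {x \<in> add_vertices k V. add_coloring c x = i}
                       = card {v \<in> V. c v = i} + 3)"
proof (intro conjI)
  have finV: "finite V" using assms(2) unfolding simple_graph_def by auto
  have finN: "finite (closed_nbhd E v)" if "v \<in> V" for v
  proof -
    have "closed_nbhd E v \<subseteq> V" using assms(2) that unfolding simple_graph_def closed_nbhd_def by auto
    thus ?thesis using finV finite_subset by blast
  qed
  have cV: "\<forall>v\<in>V. c v \<in> {1..k}" and bal: "\<And>v i j. v \<in> V \<Longrightarrow> i \<in> {1..k} \<Longrightarrow> j \<in> {1..k} \<Longrightarrow>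
        card {u \<in> closed_nbhd E v. c u = i} = card {u \<in> closed_nbhd E v. c u = j}"
    using assms(3) unfolding cnb_coloring_def by blast+
  have const: "\<exists>m. \<forall>i\<in>{1..k}. card {u \<in> closed_nbhd (add_edges k z E) x. add_coloring c u = i} = m"
    if x: "x \<in> add_vertices k V" for x
  proof (cases x)
    case (Inl v)
    have v: "v \<in> V" using x Inl unfolding add_vertices_def by auto
    show ?thesis
    proof (cases "v = z")
      case True
      show ?thesis
        apply (rule exI[of _ "card {u \<in> closed_nbhd E v. c u = k} + 1"])
      proof
        fix i assume i: "i \<in> {1..k}"
        have "card {u \<in> closed_nbhd E v. c u = i} = card {u \<in> closed_nbhd E v. c u = k}"
          using bal[OF v i] assms(1) by simp
        then show "card {u \<in> closed_nbhd (add_edges k z E) x. add_coloring c u = i} = card {u \<in> closed_nbhd E v. c u = k} + 1"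
        proof -
          have "card {u \<in> Inl ` closed_nbhd E v \<union> Inr ` U ` {1..k}. add_coloring c u = i}
             = card {u \<in> closed_nbhd E v. c u = i} + 1" by (rule filtInl[OF finN[OF v] i])
          thus ?thesis using True Inl \<open>card {u \<in> closed_nbhd E v. c u = i} = card {u \<in> closed_nbhd E v. c u = k}\<close>
            by (simp only: nb_Inl if_True Un_empty_right simp_thms)
        qed
      qed
    next
      case False
      show ?thesis
        apply (rule exI[of _ "card {u \<in> closed_nbhd E v. c u = k}"])
      proof
        fix i assume i: "i \<in> {1..k}"
        have "card {u \<in> closed_nbhd E v. c u = i} = card {u \<in> closed_nbhd E v. c u = k}"
          using bal[OF v i] assms(1) by simp
        thus "card {u \<in> closed_nbhd (add_edges k z E) x. add_coloring c u = i} = card {u \<in> closed_nbhd E v. c u = k}"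
          using False Inl by (simp add: nb_Inl filtInl0 cardInl)
      qed
    qed
  next
    case (Inr y)
    show ?thesis
    proof (cases y)
      case (U i)
      have i: "1 \<le> i" "i \<le> k" using x Inr U unfolding add_vertices_def by auto
      show ?thesis
      proof (cases "i = k")
        case True
        show ?thesis
        proof (rule exI[of _ 2], intro ballI)
          fix j assume j: "j \<in> {1..k}"
          have "closed_nbhd (add_edges k z E) x = {Inl z, Inr (U k)} \<union> Inr ` W ` {1..k-1} \<union> Inr ` W' ` {1..k-1}"
            using True Inr U nb_Uk[OF assms(1)] by simp
          thus "card {u \<in> closed_nbhd (add_edges k z E) x. add_coloring c u = j} = 2"
            using filtUk[of k j c z, OF assms(1) j assms(5)] by (cases "j = k") auto
        qed
      next
        case False
        show ?thesis
        proof (rule exI[of _ 1], intro ballI)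
          fix j assume j: "j \<in> {1..k}"
          have "closed_nbhd (add_edges k z E) x = insert (Inl z) (Inr ` U ` {1..k-1})"
            using False i Inr U nb_Us[of i k] by simp
          thus "card {u \<in> closed_nbhd (add_edges k z E) x. add_coloring c u = j} = 1"
            using filt1[of j k c z, OF j assms(5)] by (cases "j = k") auto
        qed
      qed
    next
      case (W i)
      have i: "1 \<le> i" "i < k" using x Inr W unfolding add_vertices_def by auto
      show ?thesis
      proof (rule exI[of _ 1], intro ballI)
        fix j assume j: "j \<in> {1..k}"
        have "closed_nbhd (add_edges k z E) x = insert (Inr (U k)) (Inr ` W ` {1..k-1})"
          using i Inr W nb_W[of i k] by simp
        thus "card {u \<in> closed_nbhd (add_edges k z E) x. add_coloring c u = j} = 1"
          using filtW[where c=c, OF j] by (cases "j = k") auto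
      qed
    next
      case (W' i)
      have i: "1 \<le> i" "i < k" using x Inr W' unfolding add_vertices_def by auto
      show ?thesis
      proof (rule exI[of _ 1], intro ballI)
        fix j assume j: "j \<in> {1..k}"
        have "closed_nbhd (add_edges k z E) x = insert (Inr (U k)) (Inr ` W' ` {1..k-1})"
          using i Inr W' nb_W'[of i k] by simp
        thus "card {u \<in> closed_nbhd (add_edges k z E) x. add_coloring c u = j} = 1"
          using filtW'[where c=c, OF j] by (cases "j = k") auto
      qed
    qed
  qed
  have colr: "\<forall>x\<in>add_vertices k V. add_coloring c x \<in> {1..k}"
  proof
    fix x assume x: "x \<in> add_vertices k V"
    show "add_coloring c x \<in> {1..k}"
      using x cV unfolding add_vertices_def by auto
  qed
  show "cnb_coloring (add_vertices k V) (add_edges k z E) k (add_coloring c)"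
    unfolding cnb_coloring_def
  proof (intro conjI colr ballI)
    fix x i j assume x: "x \<in> add_vertices k V" and i: "i \<in> {1..k}" and j: "j \<in> {1..k}"
    from const[OF x] obtain m where "\<forall>i\<in>{1..k}. card {u \<in> closed_nbhd (add_edges k z E) x. add_coloring c u = i} = m" by blast
    thus "card {u \<in> closed_nbhd (add_edges k z E) x. add_coloring c u = i} =
          card {u \<in> closed_nbhd (add_edges k z E) x. add_coloring c u = j}" using i j by simp
  qed
  have split: "{x \<in> add_vertices k V. add_coloring c x = i} = Inl ` {v \<in> V. c v = i} \<union>
      Inr ` {y \<in> U ` {1..k} \<union> W ` {1..k-1} \<union> W' ` {1..k-1}. add_coloring c (Inr y) = i}" for i
    unfolding add_vertices_def by auto
  have cs: "card {x \<in> add_vertices k V. add_coloring c x = i} = card {v \<in> V. c v = i} +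
      card {y \<in> U ` {1..k} \<union> W ` {1..k-1} \<union> W' ` {1..k-1}. add_coloring c (Inr y) = i}" for i
  proof -
    have "card (Inl ` {v \<in> V. c v = i} \<union>
      Inr ` {y \<in> U ` {1..k} \<union> W ` {1..k-1} \<union> W' ` {1..k-1}. add_coloring c (Inr y) = i})
      = card (Inl ` {v \<in> V. c v = i} :: ('a + newv) set) + card (Inr ` {y \<in> U ` {1..k} \<union> W ` {1..k-1} \<union> W' ` {1..k-1}. add_coloring c (Inr y) = i} :: ('a + newv) set)"
      by (rule card_Un_disjoint) (use finV in auto)
    moreover have "card (Inr ` {y \<in> U ` {1..k} \<union> W ` {1..k-1} \<union> W' ` {1..k-1}. add_coloring c (Inr y) = i})
       = card {y \<in> U ` {1..k} \<union> W ` {1..k-1} \<union> W' ` {1..k-1}. add_coloring c (Inr y) = i}"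
      by (rule card_image) (auto simp: inj_on_def)
    ultimately show ?thesis by (simp add: split cardInl)
  qed
  have "{y \<in> U ` {1..k} \<union> W ` {1..k-1} \<union> W' ` {1..k-1}. add_coloring c (Inr y) = k} = {U k}"
    using assms(1) by auto
  thus "card {x \<in> add_vertices k V. add_coloring c x = k} = card {v \<in> V. c v = k} + 1"
    by (simp add: cs)
  show "\<forall>i\<in>{1..k-1}. card {x \<in> add_vertices k V. add_coloring c x = i} = card {v \<in> V. c v = i} + 3"
  proof
    fix i assume i: "i \<in> {1..k-1}"
    have "{y \<in> U ` {1..k} \<union> W ` {1..k-1} \<union> W' ` {1..k-1}. add_coloring c (Inr y) = i} = {U i, W i, W' i}"
      using i assms(1) by auto
    thus "card {x \<in> add_vertices k V. add_coloring c x = i} = card {v \<in> V. c v = i} + 3"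
      by (simp add: cs)
  qed
qed

end
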